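(* Let $c \geq 1$ and $t$ be integers, let $G$ be a graph of matching width at least $t$, and let $Z$ be a $c$-NSOBDD computing $CNF(G)$. Then $|Z| \geq 2^{t/(2c-1)}$.
   Context: For a graph $G$, the CNF $CNF(G)$ has a variable $X_u$ for each vertex $u$ and a variable $X_{u,v}=X_{v,u}$ for each edge $\{u,v\}$; its clauses are $(X_u \vee X_{u,v} \vee X_v)$ for each edge $\{u,v\}$. Matching width: for a permutation $SV$ of $V(G)$ and a prefix $S_1$ of $SV$, the matching width of $S_1$ is the maximum size of a matching consisting of edges between $S_1$ and $V(G)\setminus S_1$; the matching width of $SV$ is the maximum over its prefixes; the matching width of $G$ is the minimum over all permutations $SV$ of $V(G)$. A non-deterministic branching program is a directed acyclic graph with one root and one leaf, some of whose edges are labelled by literals of variables. A path is consistent if it does not contain two edges labelled by opposite literals of the same variable; a consistent root-leaf path is a computational path. The program computes $F$: an assignment $S$ (as a set of literals) satisfies $F$ iff some computational path has all its labels in $S$. A $c$-NSOBDD is such a program for which there is a permutation $SV$ of its variables such that every computational path $P$ can be written as $P=P_1+\dots+P_c$ (concatenation of subpaths) where on each $P_i$ each variable occurs at most once and the labels along $P_i$ are ordered according to $SV$. $|Z|$ denotes the number of nodes of $Z$. *)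

theory Defs
  imports Complex_Main
begin

definition graph :: "'v set \<Rightarrow> 'v set set \<Rightarrow> bool" where
  "graph V E \<longleftrightarrow> finite V \<and> (\<forall>e\<in>E. \<exists>u v. u \<in> V \<and> v \<in> V \<and> u \<noteq> v \<and> e = {u, v})"

definition cross_matching :: "'v set \<Rightarrow> 'v set set \<Rightarrow> 'v set \<Rightarrow> 'v set set \<Rightarrow> bool" where
  "cross_matching V E S M \<longleftrightarrow> M \<subseteq> E \<and>
     (\<forall>e\<in>M. e \<inter> S \<noteq> {} \<and> e \<inter> (V - S) \<noteq> {}) \<and>
     (\<forall>e\<in>M. \<forall>e'\<in>M. e \<noteq> e' \<longrightarrow> e \<inter> e' = {})"

definition mw_prefix :: "'v set \<Rightarrow> 'v set set \<Rightarrow> 'v set \<Rightarrow> nat" where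
  "mw_prefix V E S = Max {card M | M. cross_matching V E S M}"

definition mw_perm :: "'v set \<Rightarrow> 'v set set \<Rightarrow> 'v list \<Rightarrow> nat" where
  "mw_perm V E SV = Max {mw_prefix V E (set (take k SV)) | k. k \<le> length SV}"

definition matching_width :: "'v set \<Rightarrow> 'v set set \<Rightarrow> nat" where
  "matching_width V E = Min (mw_perm V E ` {SV. distinct SV \<and> set SV = V})"

text \<open>Variables: X_u for vertices, X_{u,v} for edges (an edge is the set {u,v}, so X_{u,v}=X_{v,u}).\<close>
datatype 'v cvar = XV 'v | XE "'v set"

text \<open>Literals: (x, True) is the positive literal x, (x, False) its negation.\<close>
type_synonym 'x lit = "'x \<times> bool"

definition cnf_vars :: "'v set \<Rightarrow> 'v set set \<Rightarrow> 'v cvar set" where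
  "cnf_vars V E = XV ` V \<union> XE ` E"

definition edge_clause :: "'v set \<Rightarrow> 'v cvar lit set" where
  "edge_clause e = {(XV u, True) | u. u \<in> e} \<union> {(XE e, True)}"

definition CNF :: "'v set set \<Rightarrow> 'v cvar lit set set" where
  "CNF E = edge_clause ` E"

definition cnf_sat :: "'x lit set set \<Rightarrow> 'x lit set \<Rightarrow> bool" where
  "cnf_sat F S \<longleftrightarrow> (\<forall>C\<in>F. C \<inter> S \<noteq> {})"

definition is_assignment :: "'x set \<Rightarrow> 'x lit set \<Rightarrow> bool" where
  "is_assignment X S \<longleftrightarrow> S \<subseteq> X \<times> UNIV \<and> (\<forall>x\<in>X. ((x, True) \<in> S) \<noteq> ((x, False) \<in> S))"

text \<open>A program is given by a node set N, a set A of edges (source, optional literal label, target),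
  a root r and a leaf l.\<close>
type_synonym ('n, 'x) bp_edge = "'n \<times> 'x lit option \<times> 'n"

fun path_from :: "('n, 'x) bp_edge set \<Rightarrow> 'n \<Rightarrow> ('n, 'x) bp_edge list \<Rightarrow> 'n \<Rightarrow> bool" where
  "path_from A u [] w \<longleftrightarrow> u = w"
| "path_from A u ((a, lab, b) # es) w \<longleftrightarrow> (a, lab, b) \<in> A \<and> a = u \<and> path_from A b es w"

definition labels :: "('n, 'x) bp_edge list \<Rightarrow> 'x lit list" where
  "labels es = List.map_filter (\<lambda>(a, lab, b). lab) es"

definition consistent_path :: "('n, 'x) bp_edge list \<Rightarrow> bool" where
  "consistent_path es \<longleftrightarrow> \<not> (\<exists>x. (x, True) \<in> set (labels es) \<and> (x, False) \<in> set (labels es))"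

definition bp_vars :: "('n, 'x) bp_edge set \<Rightarrow> 'x set" where
  "bp_vars A = {x. \<exists>a b pol. (a, Some (x, pol), b) \<in> A}"

definition nbp :: "'x set \<Rightarrow> 'n set \<Rightarrow> ('n, 'x) bp_edge set \<Rightarrow> 'n \<Rightarrow> 'n \<Rightarrow> bool" where
  "nbp X N A r l \<longleftrightarrow> finite N \<and> finite A \<and>
     (\<forall>(a, lab, b)\<in>A. a \<in> N \<and> b \<in> N) \<and>
     (\<forall>u es. es \<noteq> [] \<longrightarrow> \<not> path_from A u es u) \<and>
     {u \<in> N. \<not> (\<exists>a lab. (a, lab, u) \<in> A)} = {r} \<and>
     {u \<in> N. \<not> (\<exists>lab b. (u, lab, b) \<in> A)} = {l} \<and>
     bp_vars A \<subseteq> X"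

definition computational_path :: "('n, 'x) bp_edge set \<Rightarrow> 'n \<Rightarrow> 'n \<Rightarrow> ('n, 'x) bp_edge list \<Rightarrow> bool" where
  "computational_path A r l es \<longleftrightarrow> path_from A r es l \<and> consistent_path es"

definition bp_computes :: "'x set \<Rightarrow> ('n, 'x) bp_edge set \<Rightarrow> 'n \<Rightarrow> 'n \<Rightarrow> ('x lit set \<Rightarrow> bool) \<Rightarrow> bool" where
  "bp_computes X A r l F \<longleftrightarrow> (\<forall>S. is_assignment X S \<longrightarrow>
     (F S \<longleftrightarrow> (\<exists>es. computational_path A r l es \<and> set (labels es) \<subseteq> S)))"

definition before :: "'x list \<Rightarrow> 'x \<Rightarrow> 'x \<Rightarrow> bool" where
  "before SV x y \<longleftrightarrow> (\<exists>i j. i < j \<and> j < length SV \<and> SV ! i = x \<and> SV ! j = y)"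

text \<open>c-NSOBDD: there is a permutation SV of the program's variables such that every
  computational path splits into c consecutive subpaths, each of which reads its variables
  at most once and in the order SV (strict increase in SV enforces both).\<close>
definition c_NSOBDD :: "nat \<Rightarrow> 'x set \<Rightarrow> 'n set \<Rightarrow> ('n, 'x) bp_edge set \<Rightarrow> 'n \<Rightarrow> 'n \<Rightarrow> bool" where
  "c_NSOBDD c X N A r l \<longleftrightarrow> nbp X N A r l \<and>
     (\<exists>SV. distinct SV \<and> set SV = bp_vars A \<and>
        (\<forall>es. computational_path A r l es \<longrightarrow>
           (\<exists>Ps. length Ps = c \<and> concat Ps = es \<and>
              (\<forall>P\<in>set Ps. sorted_wrt (before SV) (map fst (labels P))))))"

end

theory Submission
  imports Defs
begin


lemma path_append: "path_from A u (xs @ ys) w \<longleftrightarrow> (\<exists>m. path_from A u xs m \<and> path_from A m ys w)"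
  by (induction xs arbitrary: u) auto

lemma path_concat_split:
  "path_from A u (concat Bs) w \<Longrightarrow> \<exists>ns. length ns = length Bs \<and>
     (\<forall>j<length Bs. path_from A ((u#ns)!j) (Bs!j) (ns!j)) \<and> last (u#ns) = w"
proof (induction Bs arbitrary: u)
  case Nil then show ?case by simp
next
  case (Cons B Bs)
  then obtain m where m1: "path_from A u B m" and m2: "path_from A m (concat Bs) w"
    by (auto simp: path_append)
  from Cons.IH[OF m2] obtain ns where ns: "length ns = length Bs"
     "\<forall>j<length Bs. path_from A ((m#ns)!j) (Bs!j) (ns!j)" "last (m#ns) = w" by blast
  show ?case
  proof (intro exI[of _ "m#ns"] conjI allI impI)
    fix j assume "j < length (B#Bs)"
    then show "path_from A ((u # m # ns) ! j) ((B # Bs) ! j) ((m # ns) ! j)"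
      using m1 ns by (cases j) auto
  qed (use ns in auto)
qed

lemma path_concat_join:
  "length ns = length Bs \<Longrightarrow> (\<forall>j<length Bs. path_from A ((u#ns)!j) (Bs!j) (ns!j)) \<Longrightarrow>
   last (u#ns) = w \<Longrightarrow> path_from A u (concat Bs) w"
proof (induction Bs arbitrary: u ns)
  case Nil then show ?case by simp
next
  case (Cons B Bs)
  then obtain m ns' where ns: "ns = m # ns'" by (cases ns) auto
  have 1: "path_from A u B m" using Cons.prems(2) ns by (metis length_Cons nth_Cons_0 zero_less_Suc)
  have 2: "path_from A m (concat Bs) w"
    apply (rule Cons.IH[of ns'])
    using Cons.prems ns by auto
  show ?case using 1 2 by (auto simp: path_append)
qed

lemma labels_append[simp]: "labels (xs @ ys) = labels xs @ labels ys"
  by (simp add: labels_def List.map_filter_def)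

lemma labels_Nil[simp]: "labels [] = []" by (simp add: labels_def)

lemma labels_Cons[simp]: "labels ((a, lab, b) # xs) = (case lab of None \<Rightarrow> labels xs | Some y \<Rightarrow> y # labels xs)"
  by (simp add: labels_def split: option.split)

lemma set_labels_concat: "set (labels (concat Bs)) = (\<Union>B\<in>set Bs. set (labels B))"
  by (induction Bs) auto

lemma path_edges: "path_from A u es w \<Longrightarrow> set es \<subseteq> A"
proof (induction es arbitrary: u)
  case (Cons e es) then show ?case by (cases e) force
qed simp

lemma labels_in: "lit \<in> set (labels es) \<Longrightarrow> \<exists>a b. (a, Some lit, b) \<in> set es"
  proof (induction es)
  case (Cons e es) then show ?case by (cases e) (auto split: option.splits)
qed simp

lemma path_nodes: "path_from A u es w \<Longrightarrow> \<forall>(a, lab, b)\<in>A. a \<in> N \<and> b \<in> N \<Longrightarrow> u \<in> N \<Longrightarrow> w \<in> N"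
proof (induction es arbitrary: u)
  case (Cons e es) then show ?case by (cases e) force
qed simp

lemma before_take:
  assumes "distinct SV" "before SV x y" "x \<notin> set (take k SV)"
  shows "y \<notin> set (take k SV)"
proof
  assume y: "y \<in> set (take k SV)"
  from assms(2) obtain i j where ij: "i < j" "j < length SV" "SV ! i = x" "SV ! j = y"
    unfolding before_def by blast
  from y obtain j' where j': "j' < length (take k SV)" "take k SV ! j' = y" by (auto simp: in_set_conv_nth)
  have "j' < k" "j' < length SV" "SV ! j' = y" using j' by auto
  with ij assms(1) have "j' = j" using nth_eq_iff_index_eq by metis
  then have "i < k" using ij \<open>j' < k\<close> by simp
  then have "x \<in> set (take k SV)" using ij by (metis in_set_conv_nth length_take min_less_iff_conj nth_take order.strict_trans)
  with assms(3) show False by simp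
qed

lemma concat_pairs_nth:
  "j < 2 * length xs \<Longrightarrow> concat (map (\<lambda>x. [f x, g x]) xs) ! j =
     (if even j then f (xs ! (j div 2)) else g (xs ! (j div 2)))"
proof (induction xs arbitrary: j)
  case Nil then show ?case by simp
next
  case (Cons x xs)
  show ?case
  proof (cases j)
    case 0 then show ?thesis by simp
  next
    case (Suc j1)
    show ?thesis
    proof (cases j1)
      case 0 then show ?thesis using Suc by simp
    next
      case (Suc j2)
      then have "j2 < 2 * length xs" using Cons.prems \<open>j = Suc j1\<close> by simp
      then show ?thesis using Cons.IH[of j2] Suc \<open>j = Suc j1\<close> by auto
    qed
  qed
qed

definition isB :: "nat \<Rightarrow> 'x list \<Rightarrow> ('n, 'x) bp_edge \<Rightarrow> bool" where
  "isB k SV e = (case e of (a, lab, b) \<Rightarrow> (case lab of Some (x, pol) \<Rightarrow> x \<notin> set (take k SV) | None \<Rightarrow> False))"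

lemma tw_labels:
  "lit \<in> set (labels (takeWhile (\<lambda>e. \<not> isB k SV e) P)) \<Longrightarrow> fst lit \<in> set (take k SV)"
proof (induction P)
  case (Cons e P) then show ?case
    by (cases e) (auto simp: isB_def split: option.splits if_splits)
qed simp

lemma dw_labels:
  assumes "distinct SV" "sorted_wrt (before SV) (map fst (labels P))"
    and "lit \<in> set (labels (dropWhile (\<lambda>e. \<not> isB k SV e) P))"
  shows "fst lit \<notin> set (take k SV)"
proof (cases "dropWhile (\<lambda>e. \<not> isB k SV e) P")
  case Nil then show ?thesis using assms(3) unfolding Nil by simp
next
  case (Cons e0 rest)
  have hb: "isB k SV e0" and Pe: "P = takeWhile (\<lambda>e. \<not> isB k SV e) P @ e0 # rest"
    using Cons by (simp_all add: dropWhile_eq_Cons_conv)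
  then obtain a x0 pol b where e0: "e0 = (a, Some (x0, pol), b)" and x0: "x0 \<notin> set (take k SV)"
    by (cases e0) (auto simp: isB_def split: option.splits)
  have "labels P = labels (takeWhile (\<lambda>e. \<not> isB k SV e) P) @ (x0, pol) # labels rest"
    by (subst Pe) (simp add: e0)
  then have "map fst (labels P) = map fst (labels (takeWhile (\<lambda>e. \<not> isB k SV e) P)) @ x0 # map fst (labels rest)"
    by simp
  with assms(2) have srt: "sorted_wrt (before SV) (x0 # map fst (labels rest))"
    using sorted_wrt_append by metis
  have "lit \<in> set ((x0, pol) # labels rest)" using assms(3) Cons e0 by simp
  then consider "lit = (x0, pol)" | "lit \<in> set (labels rest)" by auto
  then show ?thesis
  proof cases
    case 1 then show ?thesis using x0 by simp
  next
    case 2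
    then have "before SV x0 (fst lit)" using srt by auto
    then show ?thesis using before_take[OF assms(1) _ x0] by blast
  qed
qed

definition good where
  "good A r l K k SV \<sigma> mid \<longleftrightarrow> length mid + 1 = K \<and> (\<exists>Bs. length Bs = K \<and>
     (\<forall>j<K. path_from A ((r # mid @ [l]) ! j) (Bs ! j) ((mid @ [l]) ! j) \<and>
        set (labels (Bs ! j)) \<subseteq> \<sigma> \<and>
        (even j \<longrightarrow> (\<forall>lit\<in>set (labels (Bs ! j)). fst lit \<in> set (take k SV))) \<and>
        (odd j \<longrightarrow> (\<forall>lit\<in>set (labels (Bs ! j)). fst lit \<notin> set (take k SV) \<and> fst lit \<in> set SV))))"

lemma exists_good:
  fixes es :: "('n, 'x) bp_edge list"
  assumes c: "c \<ge> 1" and dist: "distinct SV" and sv: "set SV = bp_vars A"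
    and runs: "\<forall>es. computational_path A r l es \<longrightarrow> (\<exists>Ps. length Ps = c \<and> concat Ps = es \<and>
              (\<forall>P\<in>set Ps. sorted_wrt (before SV) (map fst (labels P))))"
    and cp: "computational_path A r l es" and lab: "set (labels es) \<subseteq> \<sigma>"
    and AN: "\<forall>(a, lab, b)\<in>A. a \<in> N \<and> b \<in> N" and rN: "r \<in> N"
  shows "\<exists>mid. set mid \<subseteq> N \<and> good A r l (2*c) k SV \<sigma> mid"
proof -
  obtain Ps where Ps: "length Ps = c" "concat Ps = es"
    "\<forall>P\<in>set Ps. sorted_wrt (before SV) (map fst (labels P))" using runs cp by blast
  define tw where "tw = (\<lambda>P. takeWhile (\<lambda>e. \<not> isB k SV e) (P::('n, 'x) bp_edge list))"
  define dw where "dw = (\<lambda>P. dropWhile (\<lambda>e. \<not> isB k SV e) (P::('n, 'x) bp_edge list))"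
  define Bs where "Bs = concat (map (\<lambda>P. [tw P, dw P]) Ps)"
  have cBs: "concat Bs = es" unfolding Bs_def tw_def dw_def using Ps(2)
    by (induction Ps arbitrary: es) auto
  have lBs: "length Bs = 2 * c" unfolding Bs_def using Ps(1)
    by (induction Ps arbitrary: c) auto
  have path: "path_from A r es l" using cp by (simp add: computational_path_def)
  from path_concat_split[of A r Bs l] path cBs obtain ns where ns: "length ns = length Bs"
     "\<forall>j<length Bs. path_from A ((r#ns)!j) (Bs!j) (ns!j)" "last (r#ns) = l" by auto
  have nsne: "ns \<noteq> []" using ns(1) lBs c by auto
  define mid where "mid = butlast ns"
  have nsm: "ns = mid @ [l]" using nsne ns(3) unfolding mid_def by (metis append_butlast_last_id last_ConsR)
  have inN: "\<forall>j\<le>length Bs. (r#ns)!j \<in> N"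
  proof (intro allI impI)
    fix j assume "j \<le> length Bs"
    then show "(r#ns)!j \<in> N"
    proof (induction j)
      case 0 then show ?case using rN by simp
    next
      case (Suc j)
      then have "(r#ns)!j \<in> N" by simp
      moreover have "path_from A ((r#ns)!j) (Bs!j) (ns!j)" using ns(2) Suc.prems by simp
      ultimately have "ns!j \<in> N" using path_nodes[of A "(r#ns)!j" "Bs!j" "ns!j" N] AN by blast
      then show ?case by simp
    qed
  qed
  have midN: "set mid \<subseteq> N"
  proof
    fix x assume "x \<in> set mid"
    then obtain j where "j < length mid" "mid ! j = x" by (auto simp: in_set_conv_nth)
    then have xx: "(r#ns) ! Suc j = x" and sj: "Suc j \<le> length Bs" using nsm ns(1) by (auto simp: nth_append)
    have "(r#ns) ! Suc j \<in> N" using inN sj by blast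
    then show "x \<in> N" using xx by simp
  qed
  have esA: "set es \<subseteq> A" using path_edges[OF path] .
  have blk: "set (labels (Bs ! j)) \<subseteq> \<sigma> \<and>
        (even j \<longrightarrow> (\<forall>lit\<in>set (labels (Bs ! j)). fst lit \<in> set (take k SV))) \<and>
        (odd j \<longrightarrow> (\<forall>lit\<in>set (labels (Bs ! j)). fst lit \<notin> set (take k SV) \<and> fst lit \<in> set SV))"
    if j: "j < 2 * c" for j
  proof -
    have sub: "set (labels (Bs ! j)) \<subseteq> set (labels es)"
      using j lBs cBs set_labels_concat[of Bs] by (metis UN_upper nth_mem)
    have inSV: "fst lit \<in> set SV" if lt: "lit \<in> set (labels (Bs ! j))" for lit
    proof -
      have "lit \<in> set (labels es)" using sub lt by blast
      then obtain a b where "(a, Some lit, b) \<in> set es" using labels_in by blast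
      then have "(a, Some (fst lit, snd lit), b) \<in> A" using esA by auto
      then show ?thesis using sv unfolding bp_vars_def by blast
    qed
    have jd: "j div 2 < length Ps" using j Ps(1) by simp
    have Bj: "Bs ! j = (if even j then tw (Ps ! (j div 2)) else dw (Ps ! (j div 2)))"
      unfolding Bs_def using concat_pairs_nth[of j Ps tw dw] j Ps(1) by simp
    have srt: "sorted_wrt (before SV) (map fst (labels (Ps ! (j div 2))))" using Ps(3) jd by simp
    have sl: "set (labels (Bs ! j)) \<subseteq> \<sigma>" using sub lab by (rule order_trans)
    show ?thesis
    proof (cases "even j")
      case True
      then have BjT: "Bs ! j = tw (Ps ! (j div 2))" using Bj by simp
      have e: "\<forall>lit\<in>set (labels (Bs ! j)). fst lit \<in> set (take k SV)"
        unfolding BjT tw_def using tw_labels by blast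
      show ?thesis using sl e True by simp
    next
      case False
      then have BjF: "Bs ! j = dw (Ps ! (j div 2))" using Bj by simp
      have e: "\<forall>lit\<in>set (labels (Bs ! j)). fst lit \<notin> set (take k SV)"
        unfolding BjF dw_def using dw_labels[OF dist srt] by blast
      show ?thesis using sl e inSV False by simp
    qed
  qed
  show ?thesis
  proof (intro exI conjI)
    show "set mid \<subseteq> N" by (rule midN)
    show "good A r l (2*c) k SV \<sigma> mid"
      unfolding good_def
    proof (intro conjI exI[of _ Bs])
      show "length mid + 1 = 2 * c" using nsm ns(1) lBs by simp
      show "length Bs = 2 * c" by (rule lBs)
      show "\<forall>j<2 * c. path_from A ((r # mid @ [l]) ! j) (Bs ! j) ((mid @ [l]) ! j) \<and>
        set (labels (Bs ! j)) \<subseteq> \<sigma> \<and>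
        (even j \<longrightarrow> (\<forall>lit\<in>set (labels (Bs ! j)). fst lit \<in> set (take k SV))) \<and>
        (odd j \<longrightarrow> (\<forall>lit\<in>set (labels (Bs ! j)). fst lit \<notin> set (take k SV) \<and> fst lit \<in> set SV))"
      proof (intro allI impI conjI)
        fix j assume j: "j < 2 * c"
        show "path_from A ((r # mid @ [l]) ! j) (Bs ! j) ((mid @ [l]) ! j)"
          using ns(2) j lBs unfolding nsm[symmetric] by simp
      qed (use blk in blast)+
    qed
  qed
qed

lemma splice_path:
  assumes g1: "good A r l K k SV \<sigma>1 mid" and g2: "good A r l K k SV \<sigma>2 mid"
    and Av: "\<forall>x\<in>set SV. x \<in> Av \<longleftrightarrow> x \<in> set (take k SV)"
  shows "\<exists>es. path_from A r es l \<and> set (labels es) \<subseteq> {p\<in>\<sigma>1. fst p \<in> Av} \<union> {p\<in>\<sigma>2. fst p \<notin> Av}"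
proof -
  obtain Bs1 where B1: "length Bs1 = K" "\<forall>j<K. path_from A ((r # mid @ [l]) ! j) (Bs1 ! j) ((mid @ [l]) ! j) \<and>
        set (labels (Bs1 ! j)) \<subseteq> \<sigma>1 \<and>
        (even j \<longrightarrow> (\<forall>lit\<in>set (labels (Bs1 ! j)). fst lit \<in> set (take k SV))) \<and>
        (odd j \<longrightarrow> (\<forall>lit\<in>set (labels (Bs1 ! j)). fst lit \<notin> set (take k SV) \<and> fst lit \<in> set SV))"
    and lm: "length mid + 1 = K"
    using g1 unfolding good_def by blast
  obtain Bs2 where B2: "length Bs2 = K" "\<forall>j<K. path_from A ((r # mid @ [l]) ! j) (Bs2 ! j) ((mid @ [l]) ! j) \<and>
        set (labels (Bs2 ! j)) \<subseteq> \<sigma>2 \<and>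
        (even j \<longrightarrow> (\<forall>lit\<in>set (labels (Bs2 ! j)). fst lit \<in> set (take k SV))) \<and>
        (odd j \<longrightarrow> (\<forall>lit\<in>set (labels (Bs2 ! j)). fst lit \<notin> set (take k SV) \<and> fst lit \<in> set SV))"
    using g2 unfolding good_def by blast
  define Bs where "Bs = map (\<lambda>j. if even j then Bs1 ! j else Bs2 ! j) [0..<K]"
  have lBs: "length Bs = K" unfolding Bs_def by simp
  have p: "path_from A r (concat Bs) l"
  proof (rule path_concat_join[of "mid @ [l]"])
    show "length (mid @ [l]) = length Bs" using lBs lm by simp
    show "\<forall>j<length Bs. path_from A ((r # mid @ [l]) ! j) (Bs ! j) ((mid @ [l]) ! j)"
      using B1 B2 lBs unfolding Bs_def by auto
    show "last (r # mid @ [l]) = l" by simp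
  qed
  have "set (labels (Bs ! j)) \<subseteq> {p\<in>\<sigma>1. fst p \<in> Av} \<union> {p\<in>\<sigma>2. fst p \<notin> Av}" if j: "j < K" for j
  proof (cases "even j")
    case True
    then have "Bs ! j = Bs1 ! j" using j unfolding Bs_def by simp
    moreover have "\<forall>lit\<in>set (labels (Bs1 ! j)). fst lit \<in> Av"
      using B1(2) j True Av by (meson in_set_takeD)
    ultimately show ?thesis using B1(2) j by auto
  next
    case False
    then have "Bs ! j = Bs2 ! j" using j unfolding Bs_def by simp
    moreover have "\<forall>lit\<in>set (labels (Bs2 ! j)). fst lit \<notin> Av"
      using B2(2) j False Av by blast
    ultimately show ?thesis using B2(2) j by auto
  qed
  then have "set (labels (concat Bs)) \<subseteq> {p\<in>\<sigma>1. fst p \<in> Av} \<union> {p\<in>\<sigma>2. fst p \<notin> Av}"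
    unfolding set_labels_concat using lBs by (metis (no_types, lifting) UN_least in_set_conv_nth)
  then show ?thesis using p by blast
qed

definition val :: "'v set set \<Rightarrow> 'v set \<Rightarrow> 'v set set \<Rightarrow> 'v cvar \<Rightarrow> bool" where
  "val M S1 I x = (case x of XV w \<Rightarrow> \<not> (\<exists>e\<in>M. (e \<in> I \<and> w \<in> e \<and> w \<notin> S1) \<or> (e \<notin> I \<and> w \<in> e \<and> w \<in> S1))
     | XE e \<Rightarrow> e \<notin> M)"

definition asg :: "'v cvar set \<Rightarrow> 'v set set \<Rightarrow> 'v set \<Rightarrow> 'v set set \<Rightarrow> 'v cvar lit set" where
  "asg X M S1 I = {(x, val M S1 I x) | x. x \<in> X}"

lemma asg_mem: "(x, b) \<in> asg X M S1 I \<longleftrightarrow> x \<in> X \<and> b = val M S1 I x"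
  unfolding asg_def by blast

lemma asg_is: "is_assignment X (asg X M S1 I)"
  unfolding is_assignment_def
proof (intro conjI ballI)
  show "asg X M S1 I \<subseteq> X \<times> UNIV" unfolding asg_def by blast
  fix x assume "x \<in> X"
  then show "((x, True) \<in> asg X M S1 I) \<noteq> ((x, False) \<in> asg X M S1 I)"
    unfolding asg_mem by simp
qed

lemma graph_edge: assumes "graph V E" "e \<in> E" shows "e \<subseteq> V"
proof -
  obtain u v where "u \<in> V" "v \<in> V" "e = {u, v}" using assms unfolding graph_def by meson
  then show ?thesis by simp
qed

lemma asg_sat:
  assumes g: "graph V E" and cm: "cross_matching V E S1 M"
  shows "cnf_sat (CNF E) (asg (cnf_vars V E) M S1 I)"
  unfolding cnf_sat_def CNF_def
proof
  fix C assume "C \<in> edge_clause ` E"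
  then obtain e where e: "e \<in> E" "C = edge_clause e" by blast
  have eV: "e \<subseteq> V" using graph_edge[OF g e(1)] .
  have MM: "M \<subseteq> E" "\<forall>e\<in>M. e \<inter> S1 \<noteq> {} \<and> e \<inter> (V - S1) \<noteq> {}"
    "\<forall>e\<in>M. \<forall>e'\<in>M. e \<noteq> e' \<longrightarrow> e \<inter> e' = {}" using cm unfolding cross_matching_def by auto
  show "C \<inter> asg (cnf_vars V E) M S1 I \<noteq> {}"
  proof (cases "e \<in> M")
    case False
    then have "(XE e, True) \<in> asg (cnf_vars V E) M S1 I"
      using e(1) by (simp add: asg_mem cnf_vars_def val_def)
    moreover have "(XE e, True) \<in> C" using e(2) by (simp add: edge_clause_def)
    ultimately show ?thesis by blast
  next
    case eM: True
    show ?thesis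
    proof (cases "e \<in> I")
      case True
      obtain a where a: "a \<in> e" "a \<in> S1" using MM(2) eM by blast
      have nn: False if "e' \<in> M" "e' \<notin> I" "a \<in> e'" for e'
      proof -
        have "e' \<noteq> e" using True that(2) by auto
        then have "e \<inter> e' = {}" using MM(3) eM that(1) by blast
        then show False using a(1) that(3) by blast
      qed
      have "val M S1 I (XV a)"
        unfolding val_def using a(2) nn by auto
      then have "(XV a, True) \<in> asg (cnf_vars V E) M S1 I"
        using a eV by (simp add: asg_mem cnf_vars_def subset_iff)
      moreover have "(XV a, True) \<in> C" using e(2) a by (simp add: edge_clause_def)
      ultimately show ?thesis by blast
    next
      case False
      obtain b where b: "b \<in> e" "b \<notin> S1" using MM(2) eM by blast
      have nn: False if "e' \<in> M" "e' \<in> I" "b \<in> e'" for e'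
      proof -
        have "e' \<noteq> e" using False that(2) by auto
        then have "e \<inter> e' = {}" using MM(3) eM that(1) by blast
        then show False using b(1) that(3) by blast
      qed
      have "val M S1 I (XV b)"
        unfolding val_def using b(2) nn by auto
      then have "(XV b, True) \<in> asg (cnf_vars V E) M S1 I"
        using b eV by (simp add: asg_mem cnf_vars_def subset_iff)
      moreover have "(XV b, True) \<in> C" using e(2) b by (simp add: edge_clause_def)
      ultimately show ?thesis by blast
    qed
  qed
qed

lemma asg_falsify:
  assumes eE: "e \<in> E" and eM: "e \<in> M" and J: "e \<in> J" and I: "e \<notin> I"
    and Av: "\<forall>u\<in>e. (u \<in> S1 \<longrightarrow> XV u \<in> Av) \<and> (u \<notin> S1 \<longrightarrow> XV u \<notin> Av)"
  shows "\<not> cnf_sat (CNF E) ({p\<in>asg X M S1 I. fst p \<in> Av} \<union> {p\<in>asg X M S1 J. fst p \<notin> Av})"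
proof
  assume "cnf_sat (CNF E) ({p\<in>asg X M S1 I. fst p \<in> Av} \<union> {p\<in>asg X M S1 J. fst p \<notin> Av})"
  then have "edge_clause e \<inter> ({p\<in>asg X M S1 I. fst p \<in> Av} \<union> {p\<in>asg X M S1 J. fst p \<notin> Av}) \<noteq> {}"
    using eE unfolding cnf_sat_def CNF_def by blast
  then obtain p where p: "p \<in> edge_clause e" "p \<in> {p\<in>asg X M S1 I. fst p \<in> Av} \<union> {p\<in>asg X M S1 J. fst p \<notin> Av}"
    by blast
  from p(1) consider u where "u \<in> e" "p = (XV u, True)" | "p = (XE e, True)"
    unfolding edge_clause_def by blast
  then show False
  proof cases
    case 1
    show False
    proof (cases "u \<in> S1")
      case True
      then have "\<not> val M S1 I (XV u)" unfolding val_def using 1 eM I by auto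
      then show False using p(2) 1 True Av by (auto simp: asg_mem)
    next
      case False
      then have "\<not> val M S1 J (XV u)" unfolding val_def using 1 eM J by auto
      then show False using p(2) 1 False Av by (auto simp: asg_mem)
    qed
  next
    case 2
    then show False using p(2) eM by (auto simp: asg_mem val_def)
  qed
qed



lemma take_filter_ex:
  "j \<le> length (filter P xs) \<Longrightarrow> \<exists>k. take j (filter P xs) = filter P (take k xs)"
proof (induction xs arbitrary: j)
  case Nil then show ?case by simp
next
  case (Cons x xs)
  show ?case
  proof (cases "P x")
    case True
    show ?thesis
    proof (cases j)
      case 0 then show ?thesis by (intro exI[of _ 0]) simp
    next
      case (Suc j')
      then obtain k where "take j' (filter P xs) = filter P (take k xs)" using Cons True by auto
      then show ?thesis using Suc True by (intro exI[of _ "Suc k"]) simp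
    qed
  next
    case False
    then obtain k where "take j (filter P xs) = filter P (take k xs)" using Cons by auto
    then show ?thesis using False by (intro exI[of _ "Suc k"]) simp
  qed
qed

definition isXV :: "'v cvar \<Rightarrow> bool" where "isXV x = (case x of XV _ \<Rightarrow> True | XE _ \<Rightarrow> False)"
definition gv :: "'v cvar \<Rightarrow> 'v" where "gv x = (case x of XV u \<Rightarrow> u | XE _ \<Rightarrow> undefined)"

lemma isXV_eq: "isXV x \<Longrightarrow> x = XV (gv x)"
  by (cases x) (auto simp: isXV_def gv_def)

lemma graph_finE: assumes "graph V E" shows "finite E"
proof -
  have "E \<subseteq> Pow V"
  proof
    fix e assume "e \<in> E"
    then obtain u v where "u \<in> V" "v \<in> V" "e = {u, v}" using assms unfolding graph_def by meson
    then show "e \<in> Pow V" by simp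
  qed
  moreover have "finite V" using assms unfolding graph_def by blast
  ultimately show ?thesis by (meson finite_Pow_iff finite_subset)
qed

lemma mw_cut:
  fixes SV :: "'v cvar list"
  assumes g: "graph V E" and sv: "set SV \<subseteq> cnf_vars V E" and dist: "distinct SV"
    and mw: "matching_width V E \<ge> m"
  shows "\<exists>S1 M k. cross_matching V E S1 M \<and> card M \<ge> m \<and>
     (\<forall>u\<in>V. XV u \<in> set SV \<longrightarrow> (XV u \<in> set (take k SV) \<longleftrightarrow> u \<in> S1))"
proof -
  have finV: "finite V" using g unfolding graph_def by blast
  have finE: "finite E" using graph_finE[OF g] .
  define vs where "vs = map gv (filter isXV SV)"
  have inj: "inj_on gv (set (filter isXV SV))"
    by (rule inj_onI) (metis isXV_eq mem_Collect_eq set_filter)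
  have dvs: "distinct vs" unfolding vs_def using inj dist by (simp add: distinct_map)
  have vsV: "set vs \<subseteq> V"
  proof
    fix u assume "u \<in> set vs"
    then obtain x where x: "x \<in> set SV" "isXV x" "u = gv x" unfolding vs_def by auto
    then have "XV u \<in> cnf_vars V E" using sv isXV_eq by fastforce
    then show "u \<in> V" unfolding cnf_vars_def by auto
  qed
  obtain rest where rest: "set rest = V - set vs" "distinct rest"
    using finite_distinct_list[of "V - set vs"] finV by blast
  define pi where "pi = vs @ rest"
  have pi: "distinct pi" "set pi = V" unfolding pi_def using dvs rest vsV by auto
  have finP: "finite {SV. distinct SV \<and> set SV = V}"
  proof (rule finite_subset[of _ "{xs. set xs \<subseteq> V \<and> length xs = card V}"])
    show "{SV. distinct SV \<and> set SV = V} \<subseteq> {xs. set xs \<subseteq> V \<and> length xs = card V}"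
      using distinct_card by fastforce
    show "finite {xs. set xs \<subseteq> V \<and> length xs = card V}"
      using finite_lists_length_eq[OF finV] .
  qed
  have "matching_width V E \<le> mw_perm V E pi"
    unfolding matching_width_def using finP pi by (intro Min_le) auto
  then have mp: "mw_perm V E pi \<ge> m" using mw by simp
  have "mw_perm V E pi \<in> {mw_prefix V E (set (take k pi)) | k. k \<le> length pi}"
    unfolding mw_perm_def
  proof (rule Max_in)
    have "{mw_prefix V E (set (take k pi)) | k. k \<le> length pi} = (\<lambda>k. mw_prefix V E (set (take k pi))) ` {..length pi}"
      by auto
    then show "finite {mw_prefix V E (set (take k pi)) | k. k \<le> length pi}" by simp
    show "{mw_prefix V E (set (take k pi)) | k. k \<le> length pi} \<noteq> {}" by auto
  qed
  then obtain j where j: "j \<le> length pi" "mw_prefix V E (set (take j pi)) \<ge> m" using mp by auto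
  define S1 where "S1 = set (take j pi)"
  have "mw_prefix V E S1 \<in> {card M | M. cross_matching V E S1 M}"
    unfolding mw_prefix_def
  proof (rule Max_in)
    have "{card M | M. cross_matching V E S1 M} \<subseteq> card ` Pow E"
      unfolding cross_matching_def by auto
    then show "finite {card M | M. cross_matching V E S1 M}" using finE
      by (meson finite_Pow_iff finite_imageI finite_subset)
    have "cross_matching V E S1 {}" unfolding cross_matching_def by simp
    then show "{card M | M. cross_matching V E S1 M} \<noteq> {}" by blast
  qed
  then obtain M where M: "cross_matching V E S1 M" "card M \<ge> m" using j(2) unfolding S1_def by auto
  have cut: "\<exists>k. \<forall>u\<in>V. XV u \<in> set SV \<longrightarrow> (XV u \<in> set (take k SV) \<longleftrightarrow> u \<in> S1)"
  proof (cases "j \<le> length vs")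
    case True
    then have "j \<le> length (filter isXV SV)" unfolding vs_def by simp
    then obtain k where k: "take j (filter isXV SV) = filter isXV (take k SV)"
      using take_filter_ex by blast
    have S1e: "S1 = gv ` set (filter isXV (take k SV))"
      unfolding S1_def pi_def using True k by (simp add: vs_def take_map)
    show ?thesis
    proof (intro exI ballI impI)
      fix u assume "u \<in> V" "XV u \<in> set SV"
      show "XV u \<in> set (take k SV) \<longleftrightarrow> u \<in> S1"
      proof
        assume "XV u \<in> set (take k SV)"
        then have "XV u \<in> set (filter isXV (take k SV))" by (simp add: isXV_def)
        then show "u \<in> S1" unfolding S1e by (metis cvar.simps(5) gv_def image_eqI)
      next
        assume "u \<in> S1"
        then obtain x where "x \<in> set (take k SV)" "isXV x" "u = gv x" unfolding S1e by auto
        then show "XV u \<in> set (take k SV)" using isXV_eq by metis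
      qed
    qed
  next
    case False
    then have "set vs \<subseteq> S1" unfolding S1_def pi_def by (simp add: set_take_subset_set_take)
    show ?thesis
    proof (intro exI[of _ "length SV"] ballI impI)
      fix u assume "u \<in> V" "XV u \<in> set SV"
      then have "XV u \<in> set (filter isXV SV)" by (simp add: isXV_def)
      then have "gv (XV u) \<in> set vs" unfolding vs_def by simp
      then have "u \<in> set vs" by (simp add: gv_def)
      then show "XV u \<in> set (take (length SV) SV) \<longleftrightarrow> u \<in> S1"
        using \<open>set vs \<subseteq> S1\<close> \<open>XV u \<in> set SV\<close> by auto
    qed
  qed
  then show ?thesis using M by blast
qed


lemma final_arith:
  fixes t :: int and m n c :: nat
  assumes c: "c \<ge> 1" and n: "n \<ge> 1" and h: "(2::nat)^m \<le> n^(2*c-1)" and tm: "t \<le> int m"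
  shows "real n \<ge> 2 powr (real_of_int t / (2 * real c - 1))"
proof -
  define d where "d = 2 * real c - 1"
  have dpos: "d > 0" using c unfolding d_def by simp
  have dnat: "d = real (2*c-1)" using c unfolding d_def by (simp add: of_nat_diff)
  have "2 powr (real_of_int t / d) \<le> 2 powr (real m / d)"
    using tm dpos by (intro powr_mono divide_right_mono) auto
  also have "\<dots> = (2 powr real m) powr (1 / d)" by (simp add: powr_powr)
  also have "\<dots> = (real (2^m)) powr (1/d)" by (simp add: powr_realpow)
  also have "\<dots> \<le> (real (n^(2*c-1))) powr (1/d)"
    using h dpos by (intro powr_mono2) (auto simp del: of_nat_power)
  also have "real (n^(2*c-1)) = real n powr d" using n dnat by (simp add: powr_realpow)
  also have "(real n powr d) powr (1/d) = real n" using dpos n by (simp add: powr_powr)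
  finally show ?thesis unfolding d_def .
qed

lemma nonpos_case:
  fixes t :: int and c :: nat
  assumes "c \<ge> 1" "t \<le> 0"
  shows "2 powr (real_of_int t / (2 * real c - 1)) \<le> 1"
proof -
  have "real_of_int t / (2 * real c - 1) \<le> 0" using assms by (intro divide_nonpos_pos) auto
  then show ?thesis using powr_mono[of _ 0 2] by fastforce
qed

theorem theorem4:
  fixes V :: "'v set" and E :: "'v set set"
    and N :: "'n set" and A :: "('n, 'v cvar) bp_edge set" and r l :: 'n
    and c :: nat and t :: int
  assumes "c \<ge> 1"
    and "graph V E"
    and "int (matching_width V E) \<ge> t"
    and "c_NSOBDD c (cnf_vars V E) N A r l"
    and "bp_computes (cnf_vars V E) A r l (cnf_sat (CNF E))"
  shows "real (card N) \<ge> 2 powr (real_of_int t / (2 * real c - 1))"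
proof -
  note c = assms(1) and g = assms(2) and comp = assms(5)
  define X where "X = cnf_vars V E"
  from assms(4) obtain SV where nb: "nbp X N A r l" and dist: "distinct SV" and sv: "set SV = bp_vars A"
    and runs: "\<forall>es. computational_path A r l es \<longrightarrow> (\<exists>Ps. length Ps = c \<and> concat Ps = es \<and>
              (\<forall>P\<in>set Ps. sorted_wrt (before SV) (map fst (labels P))))"
    unfolding c_NSOBDD_def X_def by blast
  have finN: "finite N" and AN: "\<forall>(a, lab, b)\<in>A. a \<in> N \<and> b \<in> N"
    and rootset: "{u \<in> N. \<not> (\<exists>a lab. (a, lab, u) \<in> A)} = {r}" and bvX: "bp_vars A \<subseteq> X"
    using nb unfolding nbp_def by auto
  have rN: "r \<in> N" using rootset by blast
  have cardN: "card N \<ge> 1" using finN rN by (metis One_nat_def Suc_leI card_gt_0_iff empty_iff)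
  show ?thesis
  proof (cases "t \<le> 0")
    case True
    then show ?thesis using nonpos_case[OF c True] cardN by simp
  next
    case False
    have "matching_width V E \<ge> nat t" using assms(3) False by simp
    moreover have svX: "set SV \<subseteq> cnf_vars V E" using sv bvX X_def by simp
    ultimately obtain S1 M k where cm: "cross_matching V E S1 M" and cM: "card M \<ge> nat t"
      and cut: "\<forall>u\<in>V. XV u \<in> set SV \<longrightarrow> (XV u \<in> set (take k SV) \<longleftrightarrow> u \<in> S1)"
      using mw_cut[OF g _ dist] by blast
    have ME: "M \<subseteq> E" using cm unfolding cross_matching_def by blast
    have finM: "finite M" using graph_finE[OF g] ME finite_subset by blast
    define Av where "Av = set (take k SV) \<union> XV ` S1"
    have Av1: "\<forall>x\<in>set SV. x \<in> Av \<longleftrightarrow> x \<in> set (take k SV)"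
    proof (intro ballI iffI)
      fix x assume x: "x \<in> set SV" "x \<in> Av"
      show "x \<in> set (take k SV)"
      proof (cases "x \<in> set (take k SV)")
        case False
        then obtain u where u: "u \<in> S1" "x = XV u" using x(2) unfolding Av_def by blast
        then have "u \<in> V" using x(1) svX unfolding cnf_vars_def by auto
        then show ?thesis using cut u x(1) by blast
      qed
    qed (simp add: Av_def)
    have ex: "\<forall>I\<in>Pow M. \<exists>mid. set mid \<subseteq> N \<and> length mid = 2*c-1 \<and> good A r l (2*c) k SV (asg X M S1 I) mid"
    proof
      fix I assume "I \<in> Pow M"
      have "cnf_sat (CNF E) (asg X M S1 I)" using asg_sat[OF g cm] X_def by simp
      then obtain es where es: "computational_path A r l es" "set (labels es) \<subseteq> asg X M S1 I"
        using comp asg_is[of X M S1 I] unfolding bp_computes_def X_def by blast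
      from exists_good[OF c dist sv runs es AN rN]
      obtain mid where "set mid \<subseteq> N" "good A r l (2*c) k SV (asg X M S1 I) mid" by blast
      moreover then have "length mid + 1 = 2*c" unfolding good_def by blast
      then have "length mid = 2*c-1" by simp
      ultimately show "\<exists>mid. set mid \<subseteq> N \<and> length mid = 2*c-1 \<and> good A r l (2*c) k SV (asg X M S1 I) mid"
        by blast
    qed
    then obtain f where f: "\<forall>I\<in>Pow M. set (f I) \<subseteq> N \<and> length (f I) = 2*c-1 \<and> good A r l (2*c) k SV (asg X M S1 I) (f I)"
      by metis
    have noclash: False if I: "I \<in> Pow M" and J: "J \<in> Pow M" and fe: "f I = f J" and eJ: "e \<in> J" and eI: "e \<notin> I" for I J e
    proof -
      have eM: "e \<in> M" using J eJ by blast
      have eE: "e \<in> E" using eM ME by blast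
      have g1: "good A r l (2*c) k SV (asg X M S1 I) (f I)" using f I by blast
      have g2: "good A r l (2*c) k SV (asg X M S1 J) (f I)" using f J fe by metis
      define \<tau> where "\<tau> = {p\<in>asg X M S1 I. fst p \<in> Av} \<union> {p\<in>asg X M S1 J. fst p \<notin> Av}"
      obtain es where es: "path_from A r es l" "set (labels es) \<subseteq> \<tau>"
        using splice_path[OF g1 g2 Av1] unfolding \<tau>_def by blast
      have tmem: "(x, b) \<in> \<tau> \<longleftrightarrow> (x \<in> Av \<and> x \<in> X \<and> b = val M S1 I x) \<or> (x \<notin> Av \<and> x \<in> X \<and> b = val M S1 J x)" for x b
        unfolding \<tau>_def by (auto simp: asg_mem)
      have ta: "is_assignment X \<tau>"
        unfolding is_assignment_def
      proof (intro conjI ballI)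
        show "\<tau> \<subseteq> X \<times> UNIV" using tmem by auto
        fix x assume "x \<in> X"
        then show "((x, True) \<in> \<tau>) \<noteq> ((x, False) \<in> \<tau>)" using tmem by auto
      qed
      have "consistent_path es"
        unfolding consistent_path_def
      proof
        assume "\<exists>x. (x, True) \<in> set (labels es) \<and> (x, False) \<in> set (labels es)"
        then obtain x where "(x, True) \<in> \<tau>" "(x, False) \<in> \<tau>" using es(2) by blast
        then show False unfolding tmem by auto
      qed
      then have "computational_path A r l es" using es(1) unfolding computational_path_def by simp
      then have sat: "cnf_sat (CNF E) \<tau>" using comp ta es(2) unfolding bp_computes_def X_def by blast
      have Av2: "\<forall>u\<in>e. (u \<in> S1 \<longrightarrow> XV u \<in> Av) \<and> (u \<notin> S1 \<longrightarrow> XV u \<notin> Av)"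
      proof (intro ballI conjI impI)
        fix u assume u: "u \<in> e"
        show "u \<in> S1 \<Longrightarrow> XV u \<in> Av" unfolding Av_def by blast
        assume nS: "u \<notin> S1"
        have uV: "u \<in> V" using graph_edge[OF g eE] u by blast
        show "XV u \<notin> Av"
        proof
          assume "XV u \<in> Av"
          then have "XV u \<in> set (take k SV)" using nS unfolding Av_def by auto
          then show False using cut uV nS in_set_takeD by metis
        qed
      qed
      show False using asg_falsify[OF eE eM eJ eI Av2, of X] sat unfolding \<tau>_def by blast
    qed
    have inj: "inj_on f (Pow M)"
    proof (rule inj_onI)
      fix I J assume I: "I \<in> Pow M" and J: "J \<in> Pow M" and fe: "f I = f J"
      show "I = J"
      proof (rule ccontr)
        assume "I \<noteq> J"
        then obtain e where "(e \<in> J \<and> e \<notin> I) \<or> (e \<in> I \<and> e \<notin> J)" by blast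
        then show False using noclash[OF I J fe] noclash[OF J I fe[symmetric]] by blast
      qed
    qed
    have "card (Pow M) \<le> card {mid. set mid \<subseteq> N \<and> length mid = 2*c-1}"
      using inj f finite_lists_length_eq[OF finN] by (intro card_inj_on_le) auto
    then have h: "(2::nat) ^ card M \<le> card N ^ (2*c-1)"
      using card_Pow[of M] finM card_lists_length_eq[OF finN] by simp
    have "t \<le> int (card M)" using cM False by simp
    then show ?thesis using final_arith[OF c cardN h] by simp
  qed
qed

end
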